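(* Let $\Gamma=(U\cup V,E)$ be a $3$-regular bipartite graph and let $\hat\Gamma$, $\eta$, $\eta'$, $\mathrm{sgn}$ and $\mu(F,f)$ be as described in the context. For any $2$-factor $F$ of $\Gamma$, any functions $f,g:F\to\{0,1\}$ and any perfect matchings $\mu_1\in\mu(F,f)$ and $\mu_2\in\mu(F,g)$, we have $\mathrm{sgn}(\mu_1)=\mathrm{sgn}(\mu_2)$.
   Context: Construction of $\hat\Gamma$: for each vertex $v$ of $\Gamma$ with neighbours $x,y,z$, there are four inner vertices $a_{v,S}$, one for each subset $S\subseteq\{x,y,z\}$ of even size (the set $I_v$), and six outer vertices $b_{v,u,0},b_{v,u,1}$ for $u\in\{x,y,z\}$ (the set $O_v$). Within the gadget, $a_{v,S}$ is adjacent to $b_{v,u,1}$ if $u\in S$ and to $b_{v,u,0}$ if $u\notin S$. For each edge $e=\{u,v\}\in E$ and $i\in\{0,1\}$ there is an edge $e_i$ joining $b_{v,u,i}$ and $b_{u,v,i}$. No other edges. Let $X=\bigcup_{v\in U}I_v\cup\bigcup_{v\in V}O_v$, $Y=\bigcup_{v\in V}I_v\cup\bigcup_{v\in U}O_v$, $n=|X|=|Y|=10|U|$, and fix bijections $\eta:X\to[n]$, $\eta':Y\to[n]$. A perfect matching is a bijection $\mu:X\to Y$ with $\mu(x)$ adjacent to $x$ for all $x$; $\mathrm{sgn}(\mu)$ is the sign of the permutation $\eta'\circ\mu\circ\eta^{-1}$ of $[n]$. A perfect matching $\mu$ is uniform if for every $e\in E$ at most one of $e_0,e_1$ is in $\mu$;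 then $F_\mu$ is the set of $e\in E$ with exactly one of $e_0,e_1$ in $\mu$, and $f_\mu(e)=i$ iff $e_i\in\mu$. A $2$-factor of $\Gamma$ is a set $F\subseteq E$ such that every vertex is incident to exactly two edges of $F$. $\mu(F,f)$ is the set of uniform perfect matchings $\mu$ with $F_\mu=F$ and $f_\mu=f$. *)

theory Defs
  imports "HOL-Combinatorics.Permutations"
begin

text \<open>Vertices of the blown-up graph: Inner v S is a_{v,S}; Outer v u i is b_{v,u,i}
  (the bit i is encoded as a bool: False = 0, True = 1).\<close>
datatype 'a hv = Inner 'a "'a set" | Outer 'a 'a bool

definition nbrs :: "('a \<Rightarrow> 'a \<Rightarrow> bool) \<Rightarrow> 'a \<Rightarrow> 'a set" where
  "nbrs adj v = {w. adj v w}"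

definition edges :: "('a \<Rightarrow> 'a \<Rightarrow> bool) \<Rightarrow> 'a set set" where
  "edges adj = {{u, v} | u v. adj u v}"

definition cubic_bipartite :: "'a set \<Rightarrow> 'a set \<Rightarrow> ('a \<Rightarrow> 'a \<Rightarrow> bool) \<Rightarrow> bool" where
  "cubic_bipartite U V adj \<longleftrightarrow> finite U \<and> finite V \<and> U \<inter> V = {} \<and>
     (\<forall>u v. adj u v \<longleftrightarrow> adj v u) \<and>
     (\<forall>u v. adj u v \<longrightarrow> (u \<in> U \<and> v \<in> V) \<or> (u \<in> V \<and> v \<in> U)) \<and>
     (\<forall>v \<in> U \<union> V. card (nbrs adj v) = 3)"

definition inner_set :: "('a \<Rightarrow> 'a \<Rightarrow> bool) \<Rightarrow> 'a \<Rightarrow> 'a hv set" where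
  "inner_set adj v = {Inner v S | S. S \<subseteq> nbrs adj v \<and> even (card S)}"

definition outer_set :: "('a \<Rightarrow> 'a \<Rightarrow> bool) \<Rightarrow> 'a \<Rightarrow> 'a hv set" where
  "outer_set adj v = {Outer v u i | u i. u \<in> nbrs adj v}"

fun hat_adj :: "('a \<Rightarrow> 'a \<Rightarrow> bool) \<Rightarrow> 'a hv \<Rightarrow> 'a hv \<Rightarrow> bool" where
  "hat_adj adj (Inner v S) (Outer w u i) =
     (w = v \<and> S \<subseteq> nbrs adj v \<and> even (card S) \<and> u \<in> nbrs adj v \<and> (i \<longleftrightarrow> u \<in> S))"
| "hat_adj adj (Outer w u i) (Inner v S) =
     (w = v \<and> S \<subseteq> nbrs adj v \<and> even (card S) \<and> u \<in> nbrs adj v \<and> (i \<longleftrightarrow> u \<in> S))"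
| "hat_adj adj (Outer v u i) (Outer u' v' j) = (u' = u \<and> v' = v \<and> j = i \<and> adj u v)"
| "hat_adj adj (Inner v S) (Inner w T) = False"

definition Xset :: "'a set \<Rightarrow> 'a set \<Rightarrow> ('a \<Rightarrow> 'a \<Rightarrow> bool) \<Rightarrow> 'a hv set" where
  "Xset U V adj = (\<Union>v\<in>U. inner_set adj v) \<union> (\<Union>v\<in>V. outer_set adj v)"

definition Yset :: "'a set \<Rightarrow> 'a set \<Rightarrow> ('a \<Rightarrow> 'a \<Rightarrow> bool) \<Rightarrow> 'a hv set" where
  "Yset U V adj = (\<Union>v\<in>V. inner_set adj v) \<union> (\<Union>v\<in>U. outer_set adj v)"

definition perfect_matching :: "'a set \<Rightarrow> 'a set \<Rightarrow> ('a \<Rightarrow> 'a \<Rightarrow> bool) \<Rightarrow> ('a hv \<Rightarrow> 'a hv) \<Rightarrow> bool" where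
  "perfect_matching U V adj \<mu> \<longleftrightarrow> bij_betw \<mu> (Xset U V adj) (Yset U V adj) \<and>
     (\<forall>x \<in> Xset U V adj. hat_adj adj x (\<mu> x))"

definition pm_sgn :: "'a set \<Rightarrow> 'a set \<Rightarrow> ('a \<Rightarrow> 'a \<Rightarrow> bool) \<Rightarrow> ('a hv \<Rightarrow> nat) \<Rightarrow> ('a hv \<Rightarrow> nat)
    \<Rightarrow> ('a hv \<Rightarrow> 'a hv) \<Rightarrow> int" where
  "pm_sgn U V adj \<eta> \<eta>' \<mu> =
     sign_on {1..10 * card U} (\<lambda>k. \<eta>' (\<mu> (inv_into (Xset U V adj) \<eta> k)))"

text \<open>The edge e_i (e = {u,v}, u in U, v in V) joins b_{v,u,i} (in X) and b_{u,v,i} (in Y);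
  it belongs to the matching mu iff mu maps b_{v,u,i} to b_{u,v,i}.\<close>
definition edge_used :: "'a set \<Rightarrow> 'a set \<Rightarrow> ('a hv \<Rightarrow> 'a hv) \<Rightarrow> 'a set \<Rightarrow> bool \<Rightarrow> bool" where
  "edge_used U V \<mu> e i \<longleftrightarrow>
     (\<exists>u v. e = {u, v} \<and> u \<in> U \<and> v \<in> V \<and> \<mu> (Outer v u i) = Outer u v i)"

definition uniform_pm :: "'a set \<Rightarrow> 'a set \<Rightarrow> ('a \<Rightarrow> 'a \<Rightarrow> bool) \<Rightarrow> ('a hv \<Rightarrow> 'a hv) \<Rightarrow> bool" where
  "uniform_pm U V adj \<mu> \<longleftrightarrow> perfect_matching U V adj \<mu> \<and>
     (\<forall>e \<in> edges adj. \<not> (edge_used U V \<mu> e False \<and> edge_used U V \<mu> e True))"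

definition F_mu :: "'a set \<Rightarrow> 'a set \<Rightarrow> ('a \<Rightarrow> 'a \<Rightarrow> bool) \<Rightarrow> ('a hv \<Rightarrow> 'a hv) \<Rightarrow> 'a set set" where
  "F_mu U V adj \<mu> = {e \<in> edges adj. edge_used U V \<mu> e False \<noteq> edge_used U V \<mu> e True}"

definition mu_Ff :: "'a set \<Rightarrow> 'a set \<Rightarrow> ('a \<Rightarrow> 'a \<Rightarrow> bool) \<Rightarrow> 'a set set \<Rightarrow> ('a set \<Rightarrow> bool)
    \<Rightarrow> ('a hv \<Rightarrow> 'a hv) set" where
  "mu_Ff U V adj F f = {\<mu>. uniform_pm U V adj \<mu> \<and> F_mu U V adj \<mu> = F \<and>
     (\<forall>e \<in> F. \<forall>i. edge_used U V \<mu> e i \<longleftrightarrow> i = f e)}"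

definition two_factor :: "'a set \<Rightarrow> 'a set \<Rightarrow> ('a \<Rightarrow> 'a \<Rightarrow> bool) \<Rightarrow> 'a set set \<Rightarrow> bool" where
  "two_factor U V adj F \<longleftrightarrow> F \<subseteq> edges adj \<and>
     (\<forall>v \<in> U \<union> V. card {e \<in> F. v \<in> e} = 2)"

end

theory Submission
  imports Defs
begin


definition M1 where "M1 ox oy oz a b p q = (if p = a \<and> q = b then oz (a \<noteq> b) else if p \<noteq> a \<and> q = b then ox (\<not>a) else if p = a then oz (a = b) else oy (\<not>b))"
definition M2 where "M2 ox oy oz a b p q = (if p = a \<and> q = b then oz (a \<noteq> b) else if p \<noteq> a \<and> q = b then oz (a = b) else if p = a then oy (\<not>b) else ox (\<not>a))"

lemma Lchar:
  fixes ox oy oz :: "bool \<Rightarrow> 'b" and g :: "bool \<Rightarrow> bool \<Rightarrow> 'b"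
  assumes ox: "\<And>b c. ox b = ox c \<longleftrightarrow> b = c" and oy: "\<And>b c. oy b = oy c \<longleftrightarrow> b = c" and oz: "\<And>b c. oz b = oz c \<longleftrightarrow> b = c"
    and d1: "\<And>b c. ox b \<noteq> oy c" and d2: "\<And>b c. ox b \<noteq> oz c" and d3: "\<And>b c. oy b \<noteq> oz c"
    and r1: "\<And>p q. g p q = ox p \<or> g p q = oy q \<or> g p q = oz (p \<noteq> q)"
    and i1: "\<And>p q p' q'. g p q = g p' q' \<Longrightarrow> p = p' \<and> q = q'"
    and f1: "\<And>p q. g p q \<noteq> ox a \<and> g p q \<noteq> oy b"
  shows "g = M1 ox oy oz a b \<or> g = M2 ox oy oz a b"
proof -
  note d = d1 d2 d3 d1[symmetric] d2[symmetric] d3[symmetric]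
  have s: "g a b = oz (a \<noteq> b)" using r1[of a b] f1[of a b] by auto
  have sx: "g (\<not>a) b = ox (\<not>a) \<or> g (\<not>a) b = oz (a = b)" using r1[of "\<not>a" b] f1[of "\<not>a" b] by auto
  have sy: "g a (\<not>b) = oy (\<not>b) \<or> g a (\<not>b) = oz (a = b)" using r1[of a "\<not>b"] f1[of a "\<not>b"] by auto
  have sxy: "g (\<not>a) (\<not>b) = ox (\<not>a) \<or> g (\<not>a) (\<not>b) = oy (\<not>b)"
    using r1[of "\<not>a" "\<not>b"] f1[of "\<not>a" "\<not>b"] i1[of "\<not>a" "\<not>b" a b] s by (auto simp: oz)
  have all: "(\<forall>p q. P p q) \<longleftrightarrow> P a b \<and> P (\<not>a) b \<and> P a (\<not>b) \<and> P (\<not>a) (\<not>b)" for P :: "bool \<Rightarrow> bool \<Rightarrow> bool"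
    by (cases a; cases b) (auto simp: all_bool_eq)
  show ?thesis
    unfolding fun_eq_iff all M1_def M2_def
    using s sx sy sxy i1[of "\<not>a" b a "\<not>b"] i1[of "\<not>a" b "\<not>a" "\<not>b"] i1[of a "\<not>b" "\<not>a" "\<not>b"]
    by (auto simp: oz ox oy d)
qed

lemma M1_norm: "M1 ox oy oz a b p q = M1 (\<lambda>r. ox (r = a)) (\<lambda>r. oy (r = b)) (\<lambda>r. oz (r = (a = b))) True True (p = a) (q = b)"
  unfolding M1_def by (cases a; cases b; cases p; cases q) simp_all
lemma M2_norm: "M2 ox oy oz a b p q = M2 (\<lambda>r. ox (r = a)) (\<lambda>r. oy (r = b)) (\<lambda>r. oz (r = (a = b))) True True (p = a) (q = b)"
  unfolding M2_def by (cases a; cases b; cases p; cases q) simp_all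

lemma Lmix0:
  fixes ox oy oz :: "bool \<Rightarrow> 'b"
  assumes ox: "\<And>b c. ox b = ox c \<longleftrightarrow> b = c" and oy: "\<And>b c. oy b = oy c \<longleftrightarrow> b = c" and oz: "\<And>b c. oz b = oz c \<longleftrightarrow> b = c"
    and d1: "\<And>b c. ox b \<noteq> oy c" and d2: "\<And>b c. ox b \<noteq> oz c" and d3: "\<And>b c. oy b \<noteq> oz c"
  shows "M2 ox oy oz True True p0 q0 = M1 ox oy oz True True p1 q1 \<Longrightarrow> M2 ox oy oz True True p1 q1 = M1 ox oy oz True True p2 q2 \<Longrightarrow> M2 ox oy oz True True p2 q2 = M1 ox oy oz True True p0 q0"
    and "M1 ox oy oz True True p0 q0 = M2 ox oy oz True True p1 q1 \<Longrightarrow> M1 ox oy oz True True p1 q1 = M2 ox oy oz True True p2 q2 \<Longrightarrow> M1 ox oy oz True True p2 q2 = M2 ox oy oz True True p0 q0"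
  using d1 d2 d3 d1[symmetric] d2[symmetric] d3[symmetric]
  unfolding M1_def M2_def
  by (cases p0; cases q0; cases p1; cases q1; cases p2; cases q2; simp add: ox oy oz)+

lemma Lmix:
  fixes ox oy oz :: "bool \<Rightarrow> 'b"
  assumes ox: "\<And>b c. ox b = ox c \<longleftrightarrow> b = c" and oy: "\<And>b c. oy b = oy c \<longleftrightarrow> b = c" and oz: "\<And>b c. oz b = oz c \<longleftrightarrow> b = c"
    and d1: "\<And>b c. ox b \<noteq> oy c" and d2: "\<And>b c. ox b \<noteq> oz c" and d3: "\<And>b c. oy b \<noteq> oz c"
  shows "M2 ox oy oz a b p0 q0 = M1 ox oy oz a b p1 q1 \<Longrightarrow> M2 ox oy oz a b p1 q1 = M1 ox oy oz a b p2 q2 \<Longrightarrow> M2 ox oy oz a b p2 q2 = M1 ox oy oz a b p0 q0"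
    and "M1 ox oy oz a b p0 q0 = M2 ox oy oz a b p1 q1 \<Longrightarrow> M1 ox oy oz a b p1 q1 = M2 ox oy oz a b p2 q2 \<Longrightarrow> M1 ox oy oz a b p2 q2 = M2 ox oy oz a b p0 q0"
proof -
  let ?ox = "\<lambda>r. ox (r = a)" and ?oy = "\<lambda>r. oy (r = b)" and ?oz = "\<lambda>r. oz (r = (a = b))"
  have ox': "\<And>b c. ?ox b = ?ox c \<longleftrightarrow> b = c" using ox by auto
  have oy': "\<And>b' c. ?oy b' = ?oy c \<longleftrightarrow> b' = c" using oy by auto
  have oz': "\<And>b' c. ?oz b' = ?oz c \<longleftrightarrow> b' = c" using oz by auto
  have d1': "\<And>b' c. ?ox b' \<noteq> ?oy c" and d2': "\<And>b' c. ?ox b' \<noteq> ?oz c" and d3': "\<And>b' c. ?oy b' \<noteq> ?oz c"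
    using d1 d2 d3 by auto
  note L = Lmix0[OF ox' oy' oz' d1' d2' d3']
  show "M2 ox oy oz a b p0 q0 = M1 ox oy oz a b p1 q1 \<Longrightarrow> M2 ox oy oz a b p1 q1 = M1 ox oy oz a b p2 q2 \<Longrightarrow> M2 ox oy oz a b p2 q2 = M1 ox oy oz a b p0 q0"
    unfolding M1_norm[of ox oy oz a b] M2_norm[of ox oy oz a b] by (rule L(1))
  show "M1 ox oy oz a b p0 q0 = M2 ox oy oz a b p1 q1 \<Longrightarrow> M1 ox oy oz a b p1 q1 = M2 ox oy oz a b p2 q2 \<Longrightarrow> M1 ox oy oz a b p2 q2 = M2 ox oy oz a b p0 q0"
    unfolding M1_norm[of ox oy oz a b] M2_norm[of ox oy oz a b] by (rule L(2))
qed
lemma Gfin: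
  fixes ox oy oz :: "bool \<Rightarrow> 'b" and g :: "bool \<Rightarrow> bool \<Rightarrow> 'b"
  assumes ox: "\<And>b c. ox b = ox c \<longleftrightarrow> b = c" and oy: "\<And>b c. oy b = oy c \<longleftrightarrow> b = c" and oz: "\<And>b c. oz b = oz c \<longleftrightarrow> b = c"
    and d1: "\<And>b c. ox b \<noteq> oy c" and d2: "\<And>b c. ox b \<noteq> oz c" and d3: "\<And>b c. oy b \<noteq> oz c"
    and r1: "\<And>p q. g p q = ox p \<or> g p q = oy q \<or> g p q = oz (p \<noteq> q)"
    and i1: "\<And>p q p' q'. g p q = g p' q' \<Longrightarrow> p = p' \<and> q = q'"
    and f1: "\<And>p q. g p q \<noteq> ox i"
    and t: "g p0 q0 = ox (\<not> i)"
  shows "\<exists>q. g i q = oy q0 \<or> g i q = oz (p0 \<noteq> q0)"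
proof -
  note d = d1 d2 d3 d1[symmetric] d2[symmetric] d3[symmetric]
  have p0: "p0 = (\<not> i)" using r1[of p0 q0] t by (auto simp: ox d)
  show ?thesis
  proof (rule ccontr)
    assume "\<not> ?thesis"
    hence n1: "g i (\<not>q0) = oy (\<not> q0)" and n2: "g i q0 = oz (i \<noteq> q0)"
      using r1[of i "\<not>q0"] r1[of i q0] f1[of i] p0 by (auto simp: ox oy oz d)
    have "g p0 (\<not>q0) = ox p0 \<or> g p0 (\<not>q0) = oy (\<not>q0) \<or> g p0 (\<not>q0) = oz (p0 \<noteq> (\<not>q0))" using r1 by blast
    then show False
      using i1[of p0 "\<not>q0" p0 q0] i1[of p0 "\<not>q0" i "\<not>q0"] i1[of p0 "\<not>q0" i q0] n1 n2 t p0
      by (auto simp: ox oy oz d)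
  qed
qed

lemma Lloc:
  fixes ox oy oz :: "bool \<Rightarrow> 'b" and g1 g2 :: "bool \<Rightarrow> bool \<Rightarrow> 'b"
  assumes ox: "\<And>b c. ox b = ox c \<longleftrightarrow> b = c" and oy: "\<And>b c. oy b = oy c \<longleftrightarrow> b = c" and oz: "\<And>b c. oz b = oz c \<longleftrightarrow> b = c"
    and d1: "\<And>b c. ox b \<noteq> oy c" and d2: "\<And>b c. ox b \<noteq> oz c" and d3: "\<And>b c. oy b \<noteq> oz c"
    and r1: "\<And>p q. g1 p q = ox p \<or> g1 p q = oy q \<or> g1 p q = oz (p \<noteq> q)"
    and r2: "\<And>p q. g2 p q = ox p \<or> g2 p q = oy q \<or> g2 p q = oz (p \<noteq> q)"
    and i1: "\<And>p q p' q'. g1 p q = g1 p' q' \<Longrightarrow> p = p' \<and> q = q'"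
    and i2: "\<And>p q p' q'. g2 p q = g2 p' q' \<Longrightarrow> p = p' \<and> q = q'"
    and f1: "\<And>p q. g1 p q \<noteq> ox a \<and> g1 p q \<noteq> oy b"
    and f2: "\<And>p q. g2 p q \<noteq> ox a \<and> g2 p q \<noteq> oy b"
    and h1: "g2 p0 q0 = g1 p1 q1" and h2: "g2 p1 q1 = g1 p2 q2"
  shows "g2 p2 q2 = g1 p0 q0"
proof -
  have c1: "g1 = M1 ox oy oz a b \<or> g1 = M2 ox oy oz a b"
    by (rule Lchar[OF ox oy oz d1 d2 d3 r1 i1 f1])
  have c2: "g2 = M1 ox oy oz a b \<or> g2 = M2 ox oy oz a b"
    by (rule Lchar[OF ox oy oz d1 d2 d3 r2 i2 f2])
  show ?thesis
  proof (cases "g1 = g2")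
    case True
    have "p0 = p1 \<and> q0 = q1" using h1 True i1 by metis
    moreover have "p1 = p2 \<and> q1 = q2" using h2 True i1 by metis
    ultimately show ?thesis using True by blast
  next
    case False
    show ?thesis
    proof (cases "g1 = M1 ox oy oz a b")
      case True
      have T2: "g2 = M2 ox oy oz a b" using c2 False True by blast
      show ?thesis unfolding True T2
        by (rule Lmix(1)[OF ox oy oz d1 d2 d3]) (use h1 h2 True T2 in blast)+
    next
      case F2: False
      have T1: "g1 = M2 ox oy oz a b" using c1 F2 by blast
      have T2: "g2 = M1 ox oy oz a b" using c2 False T1 by blast
      show ?thesis unfolding T1 T2
        by (rule Lmix(2)[OF ox oy oz d1 d2 d3]) (use h1 h2 T1 T2 in blast)+
    qed
  qed
qed

definition Eset :: "'a \<Rightarrow> 'a \<Rightarrow> 'a \<Rightarrow> bool \<Rightarrow> bool \<Rightarrow> 'a set" where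
  "Eset x y z p q = {m. (m = x \<and> p) \<or> (m = y \<and> q) \<or> (m = z \<and> (p \<noteq> q))}"

lemma Eset_alt:
  "Eset x y z p q = (if p \<and> q then {x,y} else if p then {x,z} else if q then {y,z} else {})"
  unfolding Eset_def by (cases p; cases q) auto

lemma Eset_mem:
  assumes "x \<noteq> y" "x \<noteq> z" "y \<noteq> z"
  shows "x \<in> Eset x y z p q \<longleftrightarrow> p" "y \<in> Eset x y z p q \<longleftrightarrow> q" "z \<in> Eset x y z p q \<longleftrightarrow> p \<noteq> q"
  using assms unfolding Eset_def by auto

lemma Eset_sub: "Eset x y z p q \<subseteq> {x,y,z}"
  unfolding Eset_def by auto

lemma Eset_even:
  assumes "x \<noteq> y" "x \<noteq> z" "y \<noteq> z"
  shows "even (card (Eset x y z p q))"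
  using assms unfolding Eset_alt by (cases p; cases q) auto

lemma Eset_inj:
  assumes "x \<noteq> y" "x \<noteq> z" "y \<noteq> z" "Eset x y z p q = Eset x y z p' q'"
  shows "p = p' \<and> q = q'"
  using Eset_mem[OF assms(1-3), of p q] Eset_mem[OF assms(1-3), of p' q'] assms(4) by auto

lemma Eset_eq:
  assumes "x \<noteq> y" "x \<noteq> z" "y \<noteq> z" "S \<subseteq> {x,y,z}" "even (card S)"
  shows "S = Eset x y z (x \<in> S) (y \<in> S)"
proof -
  have "z \<in> S \<longleftrightarrow> (x \<in> S) \<noteq> (y \<in> S)"
  proof (cases "x \<in> S"; cases "y \<in> S"; cases "z \<in> S")
    assume "x \<in> S" "y \<in> S" "z \<in> S" 
    hence "S = {x,y,z}" using assms(4) by auto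
    thus ?thesis using assms by auto
  next
    assume "x \<in> S" "y \<notin> S" "z \<notin> S" 
    hence "S = {x}" using assms(4) by auto
    thus ?thesis using assms by auto
  next
    assume "x \<notin> S" "y \<in> S" "z \<notin> S" 
    hence "S = {y}" using assms(4) by auto
    thus ?thesis using assms by auto
  next
    assume "x \<notin> S" "y \<notin> S" "z \<in> S" 
    hence "S = {z}" using assms(4) by auto
    thus ?thesis using assms by auto
  qed auto
  thus ?thesis using assms(4) unfolding Eset_def by auto
qed



lemma cb_disj: "cubic_bipartite U V adj \<Longrightarrow> U \<inter> V = {}"
  by (simp add: cubic_bipartite_def)
lemma cb_finU: "cubic_bipartite U V adj \<Longrightarrow> finite U"
  by (simp add: cubic_bipartite_def)
lemma cb_finV: "cubic_bipartite U V adj \<Longrightarrow> finite V"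
  by (simp add: cubic_bipartite_def)
lemma cb_sym: "cubic_bipartite U V adj \<Longrightarrow> adj u v \<longleftrightarrow> adj v u"
  by (simp add: cubic_bipartite_def)
lemma cb_side: "cubic_bipartite U V adj \<Longrightarrow> adj u v \<Longrightarrow> (u \<in> U \<and> v \<in> V) \<or> (u \<in> V \<and> v \<in> U)"
  by (simp add: cubic_bipartite_def)
lemma cb_card: "cubic_bipartite U V adj \<Longrightarrow> v \<in> U \<union> V \<Longrightarrow> card (nbrs adj v) = 3"
  by (simp add: cubic_bipartite_def)

lemma nbrs_iff[simp]: "m \<in> nbrs adj w \<longleftrightarrow> adj w m"
  by (simp add: nbrs_def)

lemma X_Inner[simp]: "Inner w S \<in> Xset U V adj \<longleftrightarrow> w \<in> U \<and> S \<subseteq> nbrs adj w \<and> even (card S)"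
  by (auto simp: Xset_def inner_set_def outer_set_def)
lemma X_Outer[simp]: "Outer w m j \<in> Xset U V adj \<longleftrightarrow> w \<in> V \<and> adj w m"
  by (auto simp: Xset_def inner_set_def outer_set_def)
lemma Y_Inner[simp]: "Inner w S \<in> Yset U V adj \<longleftrightarrow> w \<in> V \<and> S \<subseteq> nbrs adj w \<and> even (card S)"
  by (auto simp: Yset_def inner_set_def outer_set_def)
lemma Y_Outer[simp]: "Outer w m j \<in> Yset U V adj \<longleftrightarrow> w \<in> U \<and> adj w m"
  by (auto simp: Yset_def inner_set_def outer_set_def)

lemma adjI_l: "hat_adj adj (Inner w S) t \<Longrightarrow> \<exists>m j. t = Outer w m j \<and> adj w m \<and> (j \<longleftrightarrow> m \<in> S)"
  by (cases t) auto
lemma adjI_r: "hat_adj adj t (Inner w S) \<Longrightarrow> \<exists>m j. t = Outer w m j \<and> adj w m \<and> (j \<longleftrightarrow> m \<in> S)"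
  by (cases t) auto
lemma adjO_l: "hat_adj adj (Outer v u j) t \<Longrightarrow> (t = Outer u v j \<and> adj u v) \<or> (\<exists>S. t = Inner v S \<and> (j \<longleftrightarrow> u \<in> S))"
  by (cases t) auto
lemma adjO_r: "hat_adj adj t (Outer u v j) \<Longrightarrow> (t = Outer v u j \<and> adj u v) \<or> (\<exists>T. t = Inner u T \<and> (j \<longleftrightarrow> v \<in> T))"
  by (cases t) auto

lemma doubleton_sides:
  "U \<inter> V = {} \<Longrightarrow> u \<in> U \<Longrightarrow> v \<in> V \<Longrightarrow> u' \<in> U \<Longrightarrow> v' \<in> V \<Longrightarrow> {u,v} = {u',v'} \<Longrightarrow> u = u' \<and> v = v'"
  by (auto simp: doubleton_eq_iff)

lemma edge_used_iff:
  assumes "U \<inter> V = {}" "u \<in> U" "v \<in> V"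
  shows "edge_used U V \<mu> {u,v} i \<longleftrightarrow> \<mu> (Outer v u i) = Outer u v i"
proof
  assume "edge_used U V \<mu> {u,v} i"
  then obtain u' v' where "{u,v} = {u',v'}" "u' \<in> U" "v' \<in> V" "\<mu> (Outer v' u' i) = Outer u' v' i"
    unfolding edge_used_def by blast
  moreover have "u = u' \<and> v = v'" using doubleton_sides[OF assms] calculation by blast
  ultimately show "\<mu> (Outer v u i) = Outer u v i" by simp
next
  assume "\<mu> (Outer v u i) = Outer u v i"
  thus "edge_used U V \<mu> {u,v} i" unfolding edge_used_def using assms by blast
qed

lemma edge_UV:
  assumes cb: "cubic_bipartite U V adj" and e: "e \<in> edges adj"
  shows "\<exists>u v. e = {u,v} \<and> u \<in> U \<and> v \<in> V \<and> adj u v"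
proof -
  obtain a b where ab: "e = {a,b}" "adj a b" using e by (auto simp: edges_def)
  show ?thesis
  proof (cases "a \<in> U \<and> b \<in> V")
    case True thus ?thesis using ab by blast
  next
    case False
    hence "b \<in> U \<and> a \<in> V" using cb_side[OF cb ab(2)] by blast
    moreover have "adj b a" using ab(2) cb_sym[OF cb] by blast
    ultimately show ?thesis using ab by (metis insert_commute)
  qed
qed

lemma edges_finite:
  assumes cb: "cubic_bipartite U V adj"
  shows "finite (edges adj)"
proof -
  have "edges adj \<subseteq> Pow (U \<union> V)"
    using cb_side[OF cb] by (auto simp: edges_def)
  thus ?thesis using cb_finU[OF cb] cb_finV[OF cb] by (meson finite_Pow_iff finite_UnI finite_subset)
qed

definition good :: "'a set \<Rightarrow> 'a set \<Rightarrow> ('a \<Rightarrow> 'a \<Rightarrow> bool) \<Rightarrow> 'a set set \<Rightarrow> ('a set \<Rightarrow> bool) \<Rightarrow> ('a hv \<Rightarrow> 'a hv) \<Rightarrow> bool" where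
  "good U V adj F f \<mu> \<longleftrightarrow> perfect_matching U V adj \<mu> \<and>
     (\<forall>u v i. u \<in> U \<longrightarrow> v \<in> V \<longrightarrow> adj u v \<longrightarrow> (\<mu> (Outer v u i) = Outer u v i \<longleftrightarrow> {u,v} \<in> F \<and> i = f {u,v}))"

lemma good_of_mu:
  assumes cb: "cubic_bipartite U V adj" and m: "\<mu> \<in> mu_Ff U V adj F f"
  shows "good U V adj F f \<mu>"
proof -
  from m have pm: "perfect_matching U V adj \<mu>"
    and un: "\<forall>e\<in>edges adj. \<not>(edge_used U V \<mu> e False \<and> edge_used U V \<mu> e True)"
    and Fm: "F_mu U V adj \<mu> = F" and pat: "\<forall>e\<in>F. \<forall>i. edge_used U V \<mu> e i \<longleftrightarrow> i = f e"
    by (auto simp: mu_Ff_def uniform_pm_def)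
  have disj: "U \<inter> V = {}" using cb by (simp add: cubic_bipartite_def)
  show ?thesis unfolding good_def
  proof (intro conjI pm allI impI)
    fix u v i assume u: "u \<in> U" and v: "v \<in> V" and a: "adj u v"
    have e: "{u,v} \<in> edges adj" using a by (auto simp: edges_def)
    have eu: "edge_used U V \<mu> {u,v} j \<longleftrightarrow> \<mu> (Outer v u j) = Outer u v j" for j
      using edge_used_iff[OF disj u v] .
    show "\<mu> (Outer v u i) = Outer u v i \<longleftrightarrow> {u,v} \<in> F \<and> i = f {u,v}"
    proof (cases "{u,v} \<in> F")
      case True thus ?thesis using pat eu by auto
    next
      case False
      hence "{u,v} \<notin> F_mu U V adj \<mu>" using Fm by simp
      hence "edge_used U V \<mu> {u,v} False = edge_used U V \<mu> {u,v} True" using e by (auto simp: F_mu_def)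
      moreover have "\<not>(edge_used U V \<mu> {u,v} False \<and> edge_used U V \<mu> {u,v} True)" using un e by blast
      ultimately have "\<not> edge_used U V \<mu> {u,v} i" by (cases i) auto
      thus ?thesis using False eu by auto
    qed
  qed
qed

lemma good_cong: "good U V adj F f \<mu> \<Longrightarrow> (\<forall>e\<in>F. f e = g e) \<Longrightarrow> good U V adj F g \<mu>"
  unfolding good_def by auto

lemma pm_bij: "perfect_matching U V adj \<mu> \<Longrightarrow> bij_betw \<mu> (Xset U V adj) (Yset U V adj)"
  by (simp add: perfect_matching_def)
lemma pm_adj: "perfect_matching U V adj \<mu> \<Longrightarrow> x \<in> Xset U V adj \<Longrightarrow> hat_adj adj x (\<mu> x)"
  by (simp add: perfect_matching_def)

lemma sign_pow3:
  assumes "permutation s" "s \<circ> s \<circ> s = id"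
  shows "sign s = 1"
proof -
  have "sign (s \<circ> s \<circ> s) = sign s * sign s * sign s"
    using assms(1) by (simp add: sign_compose permutation_compose)
  also have "\<dots> = sign s" by simp
  finally show ?thesis using assms(2) by simp
qed

lemma pm_sgn_perm:
  assumes eta: "bij_betw \<eta> (Xset U V adj) {1..10 * card U}"
    and eta': "bij_betw \<eta>' (Yset U V adj) {1..10 * card U}"
    and mu: "bij_betw \<mu> (Xset U V adj) (Yset U V adj)"
    and tau: "\<tau> permutes Xset U V adj" and st: "sign \<tau> = 1"
    and eq: "\<And>x. x \<in> Xset U V adj \<Longrightarrow> \<mu>' x = \<mu> (\<tau> x)"
  shows "pm_sgn U V adj \<eta> \<eta>' \<mu>' = pm_sgn U V adj \<eta> \<eta>' \<mu>"
proof -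
  define X where "X = Xset U V adj"
  define N where "N = {1..10 * card U}"
  define \<pi> where "\<pi> = (\<lambda>k. \<eta>' (\<mu> (inv_into X \<eta> k)))"
  define \<rho> where "\<rho> = (\<lambda>k. \<eta> (\<tau> (inv_into X \<eta> k)))"
  have finN: "finite N" by (simp add: N_def)
  have eta2: "bij_betw \<eta> X N" using eta by (simp add: X_def N_def)
  have finX: "finite X" using bij_betw_finite[OF eta2] finN by simp
  have inv: "bij_betw (inv_into X \<eta>) N X" using bij_betw_inv_into[OF eta2] .
  have tauX: "bij_betw \<tau> X X" using permutes_imp_bij[OF tau] by (simp add: X_def)
  have pib: "bij_betw \<pi> N N"
  proof -
    have "bij_betw (\<eta>' \<circ> (\<mu> \<circ> inv_into X \<eta>)) N N"
      by (rule bij_betw_trans[OF bij_betw_trans[OF inv] ]) (use mu eta' in \<open>simp_all add: X_def N_def\<close>)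
    thus ?thesis by (simp add: \<pi>_def o_def)
  qed
  have rhob: "bij_betw \<rho> N N"
  proof -
    have "bij_betw (\<eta> \<circ> (\<tau> \<circ> inv_into X \<eta>)) N N"
      by (rule bij_betw_trans[OF bij_betw_trans[OF inv tauX] eta2])
    thus ?thesis by (simp add: \<rho>_def o_def)
  qed
  have "pm_sgn U V adj \<eta> \<eta>' \<mu>' = sign_on N (\<pi> \<circ> \<rho>)"
    unfolding pm_sgn_def N_def[symmetric] X_def[symmetric]
  proof (rule sign_on_cong)
    fix k assume k: "k \<in> N"
    have ik: "inv_into X \<eta> k \<in> X" using inv k by (meson bij_betwE)
    have tk: "\<tau> (inv_into X \<eta> k) \<in> X" using tauX ik by (meson bij_betwE)
    have "inv_into X \<eta> (\<eta> (\<tau> (inv_into X \<eta> k))) = \<tau> (inv_into X \<eta> k)"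
      using tk eta2 by (simp add: bij_betw_def inv_into_f_f)
    thus "\<eta>' (\<mu>' (inv_into X \<eta> k)) = (\<pi> \<circ> \<rho>) k"
      using eq[of "inv_into X \<eta> k"] ik by (simp add: \<pi>_def \<rho>_def X_def)
  qed simp
  also have "\<dots> = sign_on N \<pi> * sign_on N \<rho>"
    by (rule sign_on_compose[OF pib rhob finN])
  also have "sign_on N \<rho> = 1"
  proof -
    have img: "\<eta> ` X = N" using eta2 by (simp add: bij_betw_def)
    have "sign_on N \<rho> = sign (map_permutation X \<eta> \<tau>)"
      unfolding sign_on_def map_permutation_def img by (simp add: \<rho>_def o_def)
    also have "\<dots> = sign \<tau>"
      by (rule sign_map_permutation) (use eta2 tau finX in \<open>auto simp: bij_betw_def X_def\<close>)
    finally show ?thesis using st by simp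
  qed
  finally show ?thesis unfolding pm_sgn_def N_def[symmetric] X_def[symmetric] \<pi>_def by simp
qed



lemma card3_two:
  assumes "card A = 3" "x \<in> A" "y \<in> A" "x \<noteq> y"
  shows "\<exists>z. A = {x,y,z} \<and> z \<noteq> x \<and> z \<noteq> y"
proof -
  have fin: "finite A" using assms(1) by (metis card.infinite zero_neq_numeral)
  have "card (A - {x,y}) = 1" using assms fin by (simp add: card_Diff_subset)
  then obtain z where z: "A - {x,y} = {z}" by (auto simp: card_Suc_eq)
  thus ?thesis using assms by blast
qed

lemma card3_one:
  assumes "card A = 3" "x \<in> A"
  shows "\<exists>y z. A = {x,y,z} \<and> x \<noteq> y \<and> x \<noteq> z \<and> y \<noteq> z"
proof -
  have fin: "finite A" using assms(1) by (metis card.infinite zero_neq_numeral)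
  have "card (A - {x}) = 2" using assms fin by simp
  then obtain y z where yz: "A - {x} = {y,z}" "y \<noteq> z" by (auto simp: card_2_iff)
  thus ?thesis using assms by blast
qed

lemma gadget_enc:
  assumes nb: "nbrs adj w = {x,y,z}" and dist: "x \<noteq> y" "x \<noteq> z" "y \<noteq> z"
    and ad: "\<And>S. S \<subseteq> nbrs adj w \<Longrightarrow> even (card S) \<Longrightarrow> \<exists>m j. \<phi> S = Outer w m j \<and> adj w m \<and> (j \<longleftrightarrow> m \<in> S)"
  shows "\<phi> (Eset x y z p q) = Outer w x p \<or> \<phi> (Eset x y z p q) = Outer w y q \<or> \<phi> (Eset x y z p q) = Outer w z (p \<noteq> q)"
proof -
  have E: "Eset x y z p q \<subseteq> nbrs adj w" "even (card (Eset x y z p q))"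
    unfolding nb using Eset_sub[of x y z p q] Eset_even[OF dist] by simp_all
  obtain m j where mj: "\<phi> (Eset x y z p q) = Outer w m j" "adj w m" "j \<longleftrightarrow> m \<in> Eset x y z p q"
    using ad[OF E] by blast
  have "m \<in> {x,y,z}" using mj(2) nb by (metis nbrs_iff)
  thus ?thesis using mj Eset_mem[OF dist, of p q] by auto
qed

lemma gadget_L:
  assumes nb: "nbrs adj w = {x,y,z}" and dist: "x \<noteq> y" "x \<noteq> z" "y \<noteq> z"
    and ad1: "\<And>S. S \<subseteq> nbrs adj w \<Longrightarrow> even (card S) \<Longrightarrow> \<exists>m j. \<phi>1 S = Outer w m j \<and> adj w m \<and> (j \<longleftrightarrow> m \<in> S)"
    and ad2: "\<And>S. S \<subseteq> nbrs adj w \<Longrightarrow> even (card S) \<Longrightarrow> \<exists>m j. \<phi>2 S = Outer w m j \<and> adj w m \<and> (j \<longleftrightarrow> m \<in> S)"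
    and in1: "\<And>S S'. S \<subseteq> nbrs adj w \<Longrightarrow> even (card S) \<Longrightarrow> S' \<subseteq> nbrs adj w \<Longrightarrow> even (card S') \<Longrightarrow> \<phi>1 S = \<phi>1 S' \<Longrightarrow> S = S'"
    and in2: "\<And>S S'. S \<subseteq> nbrs adj w \<Longrightarrow> even (card S) \<Longrightarrow> S' \<subseteq> nbrs adj w \<Longrightarrow> even (card S') \<Longrightarrow> \<phi>2 S = \<phi>2 S' \<Longrightarrow> S = S'"
    and fb1: "\<And>S. S \<subseteq> nbrs adj w \<Longrightarrow> even (card S) \<Longrightarrow> \<phi>1 S \<noteq> Outer w x a \<and> \<phi>1 S \<noteq> Outer w y b"
    and fb2: "\<And>S. S \<subseteq> nbrs adj w \<Longrightarrow> even (card S) \<Longrightarrow> \<phi>2 S \<noteq> Outer w x a \<and> \<phi>2 S \<noteq> Outer w y b"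
    and S0: "S0 \<subseteq> nbrs adj w" "even (card S0)"
    and S1: "S1 \<subseteq> nbrs adj w" "even (card S1)"
    and S2: "S2 \<subseteq> nbrs adj w" "even (card S2)"
    and h1: "\<phi>2 S0 = \<phi>1 S1" and h2: "\<phi>2 S1 = \<phi>1 S2"
  shows "\<phi>2 S2 = \<phi>1 S0"
proof -
  define g1 where "g1 = (\<lambda>p q. \<phi>1 (Eset x y z p q))"
  define g2 where "g2 = (\<lambda>p q. \<phi>2 (Eset x y z p q))"
  have E: "\<And>p q. Eset x y z p q \<subseteq> nbrs adj w \<and> even (card (Eset x y z p q))"
    unfolding nb using Eset_sub Eset_even[OF dist] by simp
  have oxI: "\<And>b c. Outer w x b = Outer w x c \<longleftrightarrow> b = c" by simp
  have oyI: "\<And>b c. Outer w y b = Outer w y c \<longleftrightarrow> b = c" by simp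
  have ozI: "\<And>b c. Outer w z b = Outer w z c \<longleftrightarrow> b = c" by simp
  have d1: "\<And>b c. Outer w x b \<noteq> Outer w y c" using dist by simp
  have d2: "\<And>b c. Outer w x b \<noteq> Outer w z c" using dist by simp
  have d3: "\<And>b c. Outer w y b \<noteq> Outer w z c" using dist by simp
  have r1: "\<And>p q. g1 p q = Outer w x p \<or> g1 p q = Outer w y q \<or> g1 p q = Outer w z (p \<noteq> q)"
    unfolding g1_def by (rule gadget_enc[OF nb dist ad1])
  have r2: "\<And>p q. g2 p q = Outer w x p \<or> g2 p q = Outer w y q \<or> g2 p q = Outer w z (p \<noteq> q)"
    unfolding g2_def by (rule gadget_enc[OF nb dist ad2])
  have i1: "\<And>p q p' q'. g1 p q = g1 p' q' \<Longrightarrow> p = p' \<and> q = q'"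
    unfolding g1_def using in1 E Eset_inj[OF dist] by metis
  have i2: "\<And>p q p' q'. g2 p q = g2 p' q' \<Longrightarrow> p = p' \<and> q = q'"
    unfolding g2_def using in2 E Eset_inj[OF dist] by metis
  have f1: "\<And>p q. g1 p q \<noteq> Outer w x a \<and> g1 p q \<noteq> Outer w y b"
    unfolding g1_def using fb1 E by blast
  have f2: "\<And>p q. g2 p q \<noteq> Outer w x a \<and> g2 p q \<noteq> Outer w y b"
    unfolding g2_def using fb2 E by blast
  have e0: "S0 = Eset x y z (x \<in> S0) (y \<in> S0)" using Eset_eq[OF dist] S0 nb by simp
  have e1: "S1 = Eset x y z (x \<in> S1) (y \<in> S1)" using Eset_eq[OF dist] S1 nb by simp
  have e2: "S2 = Eset x y z (x \<in> S2) (y \<in> S2)" using Eset_eq[OF dist] S2 nb by simp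
  have h1': "g2 (x \<in> S0) (y \<in> S0) = g1 (x \<in> S1) (y \<in> S1)"
    unfolding g1_def g2_def using h1 e0 e1 by simp
  have h2': "g2 (x \<in> S1) (y \<in> S1) = g1 (x \<in> S2) (y \<in> S2)"
    unfolding g1_def g2_def using h2 e1 e2 by simp
  have "g2 (x \<in> S2) (y \<in> S2) = g1 (x \<in> S0) (y \<in> S0)"
    by (rule Lloc[OF oxI oyI ozI d1 d2 d3 r1 r2 i1 i2 f1 f2 h1' h2'])
  thus ?thesis unfolding g1_def g2_def using e0 e2 by simp
qed

lemma gadget_G:
  assumes nb: "nbrs adj w = {n,y,z}" and dist: "n \<noteq> y" "n \<noteq> z" "y \<noteq> z"
    and ad: "\<And>S. S \<subseteq> nbrs adj w \<Longrightarrow> even (card S) \<Longrightarrow> \<exists>m j. \<phi> S = Outer w m j \<and> adj w m \<and> (j \<longleftrightarrow> m \<in> S)"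
    and inj: "\<And>S S'. S \<subseteq> nbrs adj w \<Longrightarrow> even (card S) \<Longrightarrow> S' \<subseteq> nbrs adj w \<Longrightarrow> even (card S') \<Longrightarrow> \<phi> S = \<phi> S' \<Longrightarrow> S = S'"
    and fb: "\<And>S. S \<subseteq> nbrs adj w \<Longrightarrow> even (card S) \<Longrightarrow> \<phi> S \<noteq> Outer w n i"
    and T: "T \<subseteq> nbrs adj w" "even (card T)" "\<phi> T = Outer w n (\<not> i)"
  shows "\<exists>T'. T' \<subseteq> nbrs adj w \<and> even (card T') \<and> (n \<in> T' \<longleftrightarrow> i) \<and> (\<exists>m. adj w m \<and> \<phi> T' = Outer w m (m \<in> T))"
proof -
  define g where "g = (\<lambda>p q. \<phi> (Eset n y z p q))"
  have E: "\<And>p q. Eset n y z p q \<subseteq> nbrs adj w \<and> even (card (Eset n y z p q))"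
    unfolding nb using Eset_sub Eset_even[OF dist] by simp
  have oxI: "\<And>b c. Outer w n b = Outer w n c \<longleftrightarrow> b = c" by simp
  have oyI: "\<And>b c. Outer w y b = Outer w y c \<longleftrightarrow> b = c" by simp
  have ozI: "\<And>b c. Outer w z b = Outer w z c \<longleftrightarrow> b = c" by simp
  have d1: "\<And>b c. Outer w n b \<noteq> Outer w y c" using dist by simp
  have d2: "\<And>b c. Outer w n b \<noteq> Outer w z c" using dist by simp
  have d3: "\<And>b c. Outer w y b \<noteq> Outer w z c" using dist by simp
  have r1: "\<And>p q. g p q = Outer w n p \<or> g p q = Outer w y q \<or> g p q = Outer w z (p \<noteq> q)"
    unfolding g_def by (rule gadget_enc[OF nb dist ad])
  have i1: "\<And>p q p' q'. g p q = g p' q' \<Longrightarrow> p = p' \<and> q = q'"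
    unfolding g_def using inj E Eset_inj[OF dist] by metis
  have f1: "\<And>p q. g p q \<noteq> Outer w n i"
    unfolding g_def using fb E by blast
  have eT: "T = Eset n y z (n \<in> T) (y \<in> T)" using Eset_eq[OF dist] T nb by simp
  have t: "g (n \<in> T) (y \<in> T) = Outer w n (\<not> i)" unfolding g_def using T(3) eT by simp
  obtain q where q: "g i q = Outer w y (y \<in> T) \<or> g i q = Outer w z ((n \<in> T) \<noteq> (y \<in> T))"
    using Gfin[OF oxI oyI ozI d1 d2 d3 r1 i1 f1 t] by blast
  have zT: "z \<in> T \<longleftrightarrow> (n \<in> T) \<noteq> (y \<in> T)" using Eset_mem(3)[OF dist] eT by metis
  have an: "adj w y" "adj w z" using nb by (auto simp: set_eq_iff)
  show ?thesis
  proof (rule exI[of _ "Eset n y z i q"], intro conjI)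
    show "Eset n y z i q \<subseteq> nbrs adj w" "even (card (Eset n y z i q))" using E by auto
    show "n \<in> Eset n y z i q \<longleftrightarrow> i" using Eset_mem(1)[OF dist] .
    show "\<exists>m. adj w m \<and> \<phi> (Eset n y z i q) = Outer w m (m \<in> T)"
      using q zT an unfolding g_def by auto
  qed
qed



lemma edge_at:
  assumes cb: "cubic_bipartite U V adj" and e: "e \<in> edges adj" and w: "w \<in> e"
  shows "\<exists>x. e = {w,x} \<and> adj w x"
proof -
  obtain a b where ab: "e = {a,b}" "adj a b" using e by (auto simp: edges_def)
  show ?thesis
  proof (cases "w = a")
    case True thus ?thesis using ab by blast
  next
    case False
    hence "w = b" using w ab by auto
    thus ?thesis using ab cb_sym[OF cb] by (metis insert_commute)
  qed
qed

lemma F_nbrs: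
  assumes cb: "cubic_bipartite U V adj" and tf: "two_factor U V adj F" and w: "w \<in> U \<union> V"
  shows "\<exists>x y z. nbrs adj w = {x,y,z} \<and> x \<noteq> y \<and> x \<noteq> z \<and> y \<noteq> z \<and> {w,x} \<in> F \<and> {w,y} \<in> F"
proof -
  have "card {e\<in>F. w \<in> e} = 2" using tf w by (simp add: two_factor_def)
  then obtain e1 e2 where e: "{e\<in>F. w \<in> e} = {e1,e2}" "e1 \<noteq> e2" by (auto simp: card_2_iff)
  have Fe: "F \<subseteq> edges adj" using tf by (simp add: two_factor_def)
  have e1: "e1 \<in> F" "w \<in> e1" and e2: "e2 \<in> F" "w \<in> e2" using e(1) by blast+
  obtain x where x: "e1 = {w,x}" "adj w x" using edge_at[OF cb _ e1(2)] e1(1) Fe by blast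
  obtain y where y: "e2 = {w,y}" "adj w y" using edge_at[OF cb _ e2(2)] e2(1) Fe by blast
  have xy: "x \<noteq> y" using x y e(2) by blast
  obtain z where z: "nbrs adj w = {x,y,z}" "z \<noteq> x" "z \<noteq> y"
    using card3_two[OF cb_card[OF cb w], of x y] x y xy by auto
  show ?thesis using z xy x y e1 e2 by blast
qed

lemma same_f:
  assumes cb: "cubic_bipartite U V adj" and tf: "two_factor U V adj F"
    and g1: "good U V adj F f \<mu>1" and g2: "good U V adj F f \<mu>2"
    and eta: "bij_betw \<eta> (Xset U V adj) {1..10 * card U}"
    and eta': "bij_betw \<eta>' (Yset U V adj) {1..10 * card U}"
  shows "pm_sgn U V adj \<eta> \<eta>' \<mu>2 = pm_sgn U V adj \<eta> \<eta>' \<mu>1"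
proof -
  define X where "X = Xset U V adj"
  define Y where "Y = Yset U V adj"
  have pm1: "perfect_matching U V adj \<mu>1" and pm2: "perfect_matching U V adj \<mu>2"
    using g1 g2 by (simp_all add: good_def)
  have b1: "bij_betw \<mu>1 X Y" and b2: "bij_betw \<mu>2 X Y"
    using pm_bij[OF pm1] pm_bij[OF pm2] by (simp_all add: X_def Y_def)
  have a1: "\<And>x. x \<in> X \<Longrightarrow> hat_adj adj x (\<mu>1 x)" and a2: "\<And>x. x \<in> X \<Longrightarrow> hat_adj adj x (\<mu>2 x)"
    using pm_adj[OF pm1] pm_adj[OF pm2] by (simp_all add: X_def)
  have inj1: "inj_on \<mu>1 X" and inj2: "inj_on \<mu>2 X" using b1 b2 by (simp_all add: bij_betw_def)
  have im1: "\<mu>1 ` X = Y" and im2: "\<mu>2 ` X = Y" using b1 b2 by (simp_all add: bij_betw_def)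
  have e1: "\<And>a b. a \<in> X \<Longrightarrow> b \<in> X \<Longrightarrow> \<mu>1 a = \<mu>1 b \<Longrightarrow> a = b" using inj1 by (meson inj_onD)
  have e2: "\<And>a b. a \<in> X \<Longrightarrow> b \<in> X \<Longrightarrow> \<mu>2 a = \<mu>2 b \<Longrightarrow> a = b" using inj2 by (meson inj_onD)
  have c12: "\<And>u v j. u \<in> U \<Longrightarrow> v \<in> V \<Longrightarrow> adj u v \<Longrightarrow> \<mu>1 (Outer v u j) = Outer u v j \<longleftrightarrow> \<mu>2 (Outer v u j) = Outer u v j"
    using g1 g2 unfolding good_def by blast
  have disj: "U \<inter> V = {}" using cb_disj[OF cb] .
  define \<sigma> where "\<sigma> = restrict_id (\<lambda>x. inv_into X \<mu>1 (\<mu>2 x)) X"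
  have sX: "\<And>x. x \<in> X \<Longrightarrow> \<sigma> x \<in> X \<and> \<mu>1 (\<sigma> x) = \<mu>2 x"
  proof -
    fix x assume x: "x \<in> X"
    have "\<mu>2 x \<in> \<mu>1 ` X" using im1 im2 x by blast
    thus "\<sigma> x \<in> X \<and> \<mu>1 (\<sigma> x) = \<mu>2 x"
      using x by (simp add: \<sigma>_def inv_into_into f_inv_into_f)
  qed
  have sperm: "\<sigma> permutes X"
  proof -
    have "bij_betw (inv_into X \<mu>1 \<circ> \<mu>2) X X"
      by (rule bij_betw_trans[OF b2 bij_betw_inv_into[OF b1]])
    hence "bij_betw (\<lambda>x. inv_into X \<mu>1 (\<mu>2 x)) X X" by (simp add: o_def)
    thus ?thesis unfolding \<sigma>_def by (rule permutes_restrict_id)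
  qed
  have key: "\<sigma> (\<sigma> (\<sigma> x0)) = x0" if x0X: "x0 \<in> X" for x0
  proof -
    define x1 where "x1 = \<sigma> x0"
    define x2 where "x2 = \<sigma> x1"
    define x3 where "x3 = \<sigma> x2"
    have x1: "x1 \<in> X" "\<mu>1 x1 = \<mu>2 x0" using sX[OF x0X] by (simp_all add: x1_def)
    have x2: "x2 \<in> X" "\<mu>1 x2 = \<mu>2 x1" using sX[OF x1(1)] by (simp_all add: x2_def)
    have x3: "x3 \<in> X" "\<mu>1 x3 = \<mu>2 x2" using sX[OF x2(1)] by (simp_all add: x3_def)
    show ?thesis unfolding x3_def[symmetric] x2_def[symmetric] x1_def[symmetric]
    proof (cases x0)
      case (Inner w a0)
      have w: "w \<in> U" using x0X Inner by (simp add: X_def)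
      have istep: "\<exists>a'. \<sigma> x = Inner w a'" if xX: "x \<in> X" and xa: "x = Inner w a" for x a
      proof -
        obtain m j where mj: "\<mu>2 x = Outer w m j" "adj w m"
          using adjI_l[OF a2[OF xX, unfolded xa]] xa by blast
        have sx: "\<sigma> x \<in> X" "\<mu>1 (\<sigma> x) = Outer w m j" using sX[OF xX] mj by simp_all
        from adjO_r[OF a1[OF sx(1), unfolded sx(2)]]
        show ?thesis
        proof
          assume o: "\<sigma> x = Outer m w j \<and> adj w m"
          hence mV: "m \<in> V" using sx(1) by (simp add: X_def)
          have "\<mu>2 (Outer m w j) = Outer w m j" using c12[OF w mV mj(2)] sx(2) o by simp
          hence "Outer m w j = x" using e2[of "Outer m w j" x] sx(1) o xX mj(1) by simp
          thus ?thesis using xa by simp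
        qed blast
      qed
      obtain a1' where A1: "x1 = Inner w a1'" using istep[OF x0X Inner] x1_def by blast
      obtain a2' where A2: "x2 = Inner w a2'" using istep[OF x1(1) A1] x2_def by blast
      obtain a3' where A3: "x3 = Inner w a3'" using istep[OF x2(1) A2] x3_def by blast
      obtain x' y' z where nb: "nbrs adj w = {x',y',z}" "x' \<noteq> y'" "x' \<noteq> z" "y' \<noteq> z" "{w,x'} \<in> F" "{w,y'} \<in> F"
        using F_nbrs[OF cb tf, of w] w by blast
      have adjx: "adj w x'" "adj w y'" using nb(1) by (auto simp: set_eq_iff)
      have x'V: "x' \<in> V" and y'V: "y' \<in> V" using cb_side[OF cb adjx(1)] cb_side[OF cb adjx(2)] w disj by blast+
      have g1x: "\<mu>1 (Outer x' w (f {w,x'})) = Outer w x' (f {w,x'})"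
        using g1 w x'V adjx nb(5) unfolding good_def by blast
      have g1y: "\<mu>1 (Outer y' w (f {w,y'})) = Outer w y' (f {w,y'})"
        using g1 w y'V adjx nb(6) unfolding good_def by blast
      have g2x: "\<mu>2 (Outer x' w (f {w,x'})) = Outer w x' (f {w,x'})"
        using g2 w x'V adjx nb(5) unfolding good_def by blast
      have g2y: "\<mu>2 (Outer y' w (f {w,y'})) = Outer w y' (f {w,y'})"
        using g2 w y'V adjx nb(6) unfolding good_def by blast
      have oxX: "Outer x' w (f {w,x'}) \<in> X" "Outer y' w (f {w,y'}) \<in> X"
        using x'V y'V adjx cb_sym[OF cb] by (auto simp: X_def)
      have inX: "\<And>S. S \<subseteq> nbrs adj w \<Longrightarrow> even (card S) \<Longrightarrow> Inner w S \<in> X" using w by (simp add: X_def)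
      have "\<mu>2 (Inner w a2') = \<mu>1 (Inner w a0)"
      proof (rule gadget_L[OF nb(1-4), where ?\<phi>1.0 = "\<lambda>S. \<mu>1 (Inner w S)" and ?\<phi>2.0 = "\<lambda>S. \<mu>2 (Inner w S)"
            and a = "f {w,x'}" and b = "f {w,y'}"])
        show "\<exists>m j. \<mu>1 (Inner w S) = Outer w m j \<and> adj w m \<and> (j \<longleftrightarrow> m \<in> S)"
          if "S \<subseteq> nbrs adj w" "even (card S)" for S
          using adjI_l[OF a1[OF inX[OF that]]] by blast
        show "\<exists>m j. \<mu>2 (Inner w S) = Outer w m j \<and> adj w m \<and> (j \<longleftrightarrow> m \<in> S)"
          if "S \<subseteq> nbrs adj w" "even (card S)" for S
          using adjI_l[OF a2[OF inX[OF that]]] by blast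
        show "S = S'" if "S \<subseteq> nbrs adj w" "even (card S)" "S' \<subseteq> nbrs adj w" "even (card S')"
            "\<mu>1 (Inner w S) = \<mu>1 (Inner w S')" for S S'
          using e1[OF inX[OF that(1,2)] inX[OF that(3,4)] that(5)] by simp
        show "S = S'" if "S \<subseteq> nbrs adj w" "even (card S)" "S' \<subseteq> nbrs adj w" "even (card S')"
            "\<mu>2 (Inner w S) = \<mu>2 (Inner w S')" for S S'
          using e2[OF inX[OF that(1,2)] inX[OF that(3,4)] that(5)] by simp
        show "\<mu>1 (Inner w S) \<noteq> Outer w x' (f {w,x'}) \<and> \<mu>1 (Inner w S) \<noteq> Outer w y' (f {w,y'})"
          if "S \<subseteq> nbrs adj w" "even (card S)" for S
          using e1[OF inX[OF that] oxX(1)] e1[OF inX[OF that] oxX(2)] g1x g1y by auto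
        show "\<mu>2 (Inner w S) \<noteq> Outer w x' (f {w,x'}) \<and> \<mu>2 (Inner w S) \<noteq> Outer w y' (f {w,y'})"
          if "S \<subseteq> nbrs adj w" "even (card S)" for S
          using e2[OF inX[OF that] oxX(1)] e2[OF inX[OF that] oxX(2)] g2x g2y by auto
        show "a0 \<subseteq> nbrs adj w" "even (card a0)" using x0X Inner by (simp_all add: X_def)
        show "a1' \<subseteq> nbrs adj w" "even (card a1')" using x1(1) A1 by (simp_all add: X_def)
        show "a2' \<subseteq> nbrs adj w" "even (card a2')" using x2(1) A2 by (simp_all add: X_def)
        show "\<mu>2 (Inner w a0) = \<mu>1 (Inner w a1')" using x1(2) A1 Inner by simp
        show "\<mu>2 (Inner w a1') = \<mu>1 (Inner w a2')" using x2(2) A1 A2 by simp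
      qed
      hence "\<mu>1 x3 = \<mu>1 x0" using x3(2) A2 Inner by simp
      thus "x3 = x0" using e1 x3(1) x0X by blast
    next
      case (Outer w m j)
      have w: "w \<in> V" using x0X Outer by (simp add: X_def)
      have dich: "\<sigma> x = x \<or> (\<exists>c. \<mu>2 x = Inner w c)" if xX: "x \<in> X" and xa: "x = Outer w m' j'" for x m' j'
      proof -
        from adjO_l[OF a2[OF xX, unfolded xa]]
        show ?thesis
        proof
          assume o: "\<mu>2 (Outer w m' j') = Outer m' w j' \<and> adj m' w"
          have m'U: "m' \<in> U" using cb_side[OF cb o[THEN conjunct2]] w disj by blast
          have "\<mu>1 x = \<mu>2 x" using c12[OF m'U w] o xa by simp
          hence "\<sigma> x = x" using sX[OF xX] e1[of "\<sigma> x" x] xX by simp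
          thus ?thesis by blast
        qed (use xa in blast)
      qed
      have pre: "\<exists>m' j'. x = Outer w m' j'" if xX: "x \<in> X" and xc: "\<mu>1 x = Inner w c" for x c
        using adjI_r[OF a1[OF xX, unfolded xc]] by blast
      show "x3 = x0"
      proof (cases "x1 = x0")
        case True
        hence "x2 = x0" using x1_def x2_def by simp
        thus ?thesis using True x2_def x3_def by simp
      next
        case ne0: False
        obtain c0 where C0: "\<mu>2 x0 = Inner w c0" using dich[OF x0X Outer] ne0 x1_def by blast
        obtain m1 j1 where M1: "x1 = Outer w m1 j1" using pre[OF x1(1)] x1(2) C0 by metis
        have ne1: "x2 \<noteq> x1"
        proof
          assume "x2 = x1"
          hence "\<mu>2 x1 = \<mu>2 x0" using x1(2) x2(2) by simp
          thus False using e2[OF x1(1) x0X] ne0 by simp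
        qed
        obtain c1 where C1: "\<mu>2 x1 = Inner w c1" using dich[OF x1(1) M1] ne1 x2_def by blast
        obtain m2 j2 where M2: "x2 = Outer w m2 j2" using pre[OF x2(1)] x2(2) C1 by metis
        have ne2: "x3 \<noteq> x2"
        proof
          assume "x3 = x2"
          hence "\<mu>2 x2 = \<mu>2 x1" using x2(2) x3(2) by simp
          thus False using e2[OF x2(1) x1(1)] ne1 by simp
        qed
        obtain c2 where C2: "\<mu>2 x2 = Inner w c2" using dich[OF x2(1) M2] ne2 x3_def by blast
        have cY0: "Inner w c0 \<in> Y" by (metis C0 x0X im2 imageI)
        have cY1: "Inner w c1 \<in> Y" by (metis C1 x1(1) im2 imageI)
        have cY2: "Inner w c2 \<in> Y" by (metis C2 x2(1) im2 imageI)
        note cY = cY0 cY1 cY2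
        have cc: "c0 \<subseteq> nbrs adj w" "even (card c0)" "c1 \<subseteq> nbrs adj w" "even (card c1)"
             "c2 \<subseteq> nbrs adj w" "even (card c2)" using cY by (simp_all add: Y_def)
        obtain x' y' z where nb: "nbrs adj w = {x',y',z}" "x' \<noteq> y'" "x' \<noteq> z" "y' \<noteq> z" "{w,x'} \<in> F" "{w,y'} \<in> F"
          using F_nbrs[OF cb tf, of w] w by blast
        have adjx: "adj w x'" "adj w y'" using nb(1) by (auto simp: set_eq_iff)
        have x'U: "x' \<in> U" and y'U: "y' \<in> U" using cb_side[OF cb adjx(1)] cb_side[OF cb adjx(2)] w disj by blast+
        have adjx': "adj x' w" "adj y' w" using adjx cb_sym[OF cb] by blast+
        have Fx: "{x',w} \<in> F" "{y',w} \<in> F" using nb(5,6) by (simp_all add: insert_commute)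
        have g1x: "\<mu>1 (Outer w x' (f {x',w})) = Outer x' w (f {x',w})"
          using g1 w x'U adjx' Fx unfolding good_def by blast
        have g1y: "\<mu>1 (Outer w y' (f {y',w})) = Outer y' w (f {y',w})"
          using g1 w y'U adjx' Fx unfolding good_def by blast
        have g2x: "\<mu>2 (Outer w x' (f {x',w})) = Outer x' w (f {x',w})"
          using g2 w x'U adjx' Fx unfolding good_def by blast
        have g2y: "\<mu>2 (Outer w y' (f {y',w})) = Outer y' w (f {y',w})"
          using g2 w y'U adjx' Fx unfolding good_def by blast
        have inY: "\<And>S. S \<subseteq> nbrs adj w \<Longrightarrow> even (card S) \<Longrightarrow> Inner w S \<in> Y" using w by (simp add: Y_def)
        define \<phi>1 where "\<phi>1 = (\<lambda>S. inv_into X \<mu>1 (Inner w S))"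
        define \<phi>2 where "\<phi>2 = (\<lambda>S. inv_into X \<mu>2 (Inner w S))"
        have p1: "\<phi>1 S \<in> X \<and> \<mu>1 (\<phi>1 S) = Inner w S" if "S \<subseteq> nbrs adj w" "even (card S)" for S
        proof -
          have "Inner w S \<in> \<mu>1 ` X" using inY[OF that] im1 by simp
          thus ?thesis by (simp add: \<phi>1_def inv_into_into f_inv_into_f)
        qed
        have p2: "\<phi>2 S \<in> X \<and> \<mu>2 (\<phi>2 S) = Inner w S" if "S \<subseteq> nbrs adj w" "even (card S)" for S
        proof -
          have "Inner w S \<in> \<mu>2 ` X" using inY[OF that] im2 by simp
          thus ?thesis by (simp add: \<phi>2_def inv_into_into f_inv_into_f)
        qed
        have q0: "\<phi>2 c0 = x0" using e2[of "\<phi>2 c0" x0] p2[OF cc(1,2)] x0X C0 by simp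
        have q1: "\<phi>1 c0 = x1" using e1[of "\<phi>1 c0" x1] p1[OF cc(1,2)] x1 C0 by simp
        have q2: "\<phi>2 c1 = x1" using e2[of "\<phi>2 c1" x1] p2[OF cc(3,4)] x1 C1 by simp
        have q3: "\<phi>1 c1 = x2" using e1[of "\<phi>1 c1" x2] p1[OF cc(3,4)] x2 C1 by simp
        have q4: "\<phi>2 c2 = x2" using e2[of "\<phi>2 c2" x2] p2[OF cc(5,6)] x2 C2 by simp
        have q5: "\<phi>1 c2 = x3" using e1[of "\<phi>1 c2" x3] p1[OF cc(5,6)] x3 C2 by simp
        have "\<phi>1 c2 = \<phi>2 c0"
        proof (rule gadget_L[OF nb(1-4), where ?\<phi>1.0 = \<phi>2 and ?\<phi>2.0 = \<phi>1
            and a = "f {x',w}" and b = "f {y',w}"])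
          show "\<exists>m j. \<phi>2 S = Outer w m j \<and> adj w m \<and> (j \<longleftrightarrow> m \<in> S)"
            if "S \<subseteq> nbrs adj w" "even (card S)" for S
            using adjI_r[of adj "\<phi>2 S" w S] a2[OF p2[OF that, THEN conjunct1]] p2[OF that] by auto
          show "\<exists>m j. \<phi>1 S = Outer w m j \<and> adj w m \<and> (j \<longleftrightarrow> m \<in> S)"
            if "S \<subseteq> nbrs adj w" "even (card S)" for S
            using adjI_r[of adj "\<phi>1 S" w S] a1[OF p1[OF that, THEN conjunct1]] p1[OF that] by auto
          show "S = S'" if "S \<subseteq> nbrs adj w" "even (card S)" "S' \<subseteq> nbrs adj w" "even (card S')"
              "\<phi>2 S = \<phi>2 S'" for S S'
            using p2[OF that(1,2)] p2[OF that(3,4)] that(5) by (metis hv.inject(1))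
          show "S = S'" if "S \<subseteq> nbrs adj w" "even (card S)" "S' \<subseteq> nbrs adj w" "even (card S')"
              "\<phi>1 S = \<phi>1 S'" for S S'
            using p1[OF that(1,2)] p1[OF that(3,4)] that(5) by (metis hv.inject(1))
          show "\<phi>2 S \<noteq> Outer w x' (f {x',w}) \<and> \<phi>2 S \<noteq> Outer w y' (f {y',w})"
            if "S \<subseteq> nbrs adj w" "even (card S)" for S
            using p2[OF that] g2x g2y by auto
          show "\<phi>1 S \<noteq> Outer w x' (f {x',w}) \<and> \<phi>1 S \<noteq> Outer w y' (f {y',w})"
            if "S \<subseteq> nbrs adj w" "even (card S)" for S
            using p1[OF that] g1x g1y by auto
          show "c0 \<subseteq> nbrs adj w" "even (card c0)" "c1 \<subseteq> nbrs adj w" "even (card c1)"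
             "c2 \<subseteq> nbrs adj w" "even (card c2)" using cc by simp_all
          show "\<phi>1 c0 = \<phi>2 c1" using q1 q2 by simp
          show "\<phi>1 c1 = \<phi>2 c2" using q3 q4 by simp
        qed
        thus ?thesis using q0 q5 by simp
      qed
    qed
  qed
  have finX: "finite X" using bij_betw_finite[OF eta] by (simp add: X_def)
  have s3: "\<sigma> \<circ> \<sigma> \<circ> \<sigma> = id"
  proof
    fix x show "(\<sigma> \<circ> \<sigma> \<circ> \<sigma>) x = id x"
    proof (cases "x \<in> X")
      case True thus ?thesis using key by simp
    next
      case False
      hence "\<sigma> x = x" by (simp add: \<sigma>_def restrict_id_def)
      thus ?thesis by simp
    qed
  qed
  have ss: "sign \<sigma> = 1"
    by (rule sign_pow3[OF permutes_imp_permutation[OF finX sperm] s3])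
  show ?thesis
    by (rule pm_sgn_perm[OF eta eta' pm_bij[OF pm1], of \<sigma>])
       (use sperm ss sX in \<open>simp_all add: X_def\<close>)
qed



lemma flip:
  assumes cb: "cubic_bipartite U V adj" and tf: "two_factor U V adj F"
    and gd: "good U V adj F f \<mu>" and eF: "e \<in> F"
    and eta: "bij_betw \<eta> (Xset U V adj) {1..10 * card U}"
    and eta': "bij_betw \<eta>' (Yset U V adj) {1..10 * card U}"
  shows "\<exists>\<mu>'. good U V adj F (f(e := \<not> f e)) \<mu>' \<and> pm_sgn U V adj \<eta> \<eta>' \<mu>' = pm_sgn U V adj \<eta> \<eta>' \<mu>"
proof -
  define X where "X = Xset U V adj"
  define Y where "Y = Yset U V adj"
  have pm: "perfect_matching U V adj \<mu>" using gd by (simp add: good_def)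
  have b: "bij_betw \<mu> X Y" using pm_bij[OF pm] by (simp add: X_def Y_def)
  have ad: "\<And>x. x \<in> X \<Longrightarrow> hat_adj adj x (\<mu> x)" using pm_adj[OF pm] by (simp add: X_def)
  have inj: "inj_on \<mu> X" and im: "\<mu> ` X = Y" using b by (simp_all add: bij_betw_def)
  have ei: "\<And>a b. a \<in> X \<Longrightarrow> b \<in> X \<Longrightarrow> \<mu> a = \<mu> b \<Longrightarrow> a = b" using inj by (meson inj_onD)
  have gdc: "\<And>u v i. u \<in> U \<Longrightarrow> v \<in> V \<Longrightarrow> adj u v \<Longrightarrow> (\<mu> (Outer v u i) = Outer u v i \<longleftrightarrow> {u,v} \<in> F \<and> i = f {u,v})"
    using gd unfolding good_def by blast
  have disj: "U \<inter> V = {}" using cb_disj[OF cb] .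
  have Fe: "F \<subseteq> edges adj" using tf by (simp add: two_factor_def)
  obtain u v where uv: "e = {u,v}" "u \<in> U" "v \<in> V" "adj u v" using edge_UV[OF cb] eF Fe by blast
  have adjvu: "adj v u" using uv(4) cb_sym[OF cb] by blast
  define i where "i = f e"
  define p where "p = Outer v u (\<not> i)"
  define q where "q = Outer v u i"
  have pX: "p \<in> X" and qX: "q \<in> X" using uv adjvu by (simp_all add: p_def q_def X_def)
  have gq: "\<mu> q = Outer u v i" using gdc[OF uv(2,3,4), of i] eF uv(1) by (simp add: q_def i_def)
  have gp: "\<mu> p \<noteq> Outer u v (\<not> i)" using gdc[OF uv(2,3,4), of "\<not> i"] uv(1) by (simp add: p_def i_def)
  obtain S where S: "\<mu> p = Inner v S" "\<not> i \<longleftrightarrow> u \<in> S"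
    using adjO_l[OF ad[OF pX, unfolded p_def]] gp by (auto simp: p_def)
  have SY: "Inner v S \<in> Y" using S(1) pX im by (metis imageI)
  have Ss: "S \<subseteq> nbrs adj v" "even (card S)" using SY by (simp_all add: Y_def)
  have oY: "Outer u v (\<not> i) \<in> Y" using uv by (simp add: Y_def)
  define a where "a = inv_into X \<mu> (Outer u v (\<not> i))"
  have aX: "a \<in> X" "\<mu> a = Outer u v (\<not> i)"
    using oY im by (auto simp: a_def inv_into_into f_inv_into_f)
  obtain T where T: "a = Inner u T" "\<not> i \<longleftrightarrow> v \<in> T"
  proof -
    from adjO_r[OF ad[OF aX(1), unfolded aX(2)]]
    show ?thesis
    proof
      assume "a = Outer v u (\<not> i) \<and> adj u v"
      hence "a = p" by (simp add: p_def)
      thus ?thesis using aX gp by simp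
    qed (use that in blast)
  qed
  have Ts: "T \<subseteq> nbrs adj u" "even (card T)" using aX(1) T(1) by (simp_all add: X_def)
  have vnu: "v \<in> nbrs adj u" and unv: "u \<in> nbrs adj v" using uv(4) adjvu by simp_all
  obtain y1 z1 where nbu: "nbrs adj u = {v,y1,z1}" "v \<noteq> y1" "v \<noteq> z1" "y1 \<noteq> z1"
    using card3_one[OF cb_card[OF cb] vnu] uv(2) by blast
  obtain y2 z2 where nbv: "nbrs adj v = {u,y2,z2}" "u \<noteq> y2" "u \<noteq> z2" "y2 \<noteq> z2"
    using card3_one[OF cb_card[OF cb] unv] uv(3) by blast
  have inXu: "\<And>R. R \<subseteq> nbrs adj u \<Longrightarrow> even (card R) \<Longrightarrow> Inner u R \<in> X" using uv(2) by (simp add: X_def)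
  have inYv: "\<And>R. R \<subseteq> nbrs adj v \<Longrightarrow> even (card R) \<Longrightarrow> Inner v R \<in> Y" using uv(3) by (simp add: Y_def)
  obtain T' where T': "T' \<subseteq> nbrs adj u" "even (card T')" "v \<in> T' \<longleftrightarrow> i"
      "\<exists>m. adj u m \<and> \<mu> (Inner u T') = Outer u m (m \<in> T)"
  proof -
    have "\<exists>T'. T' \<subseteq> nbrs adj u \<and> even (card T') \<and> (v \<in> T' \<longleftrightarrow> i) \<and> (\<exists>m. adj u m \<and> \<mu> (Inner u T') = Outer u m (m \<in> T))"
    proof (rule gadget_G[OF nbu, where \<phi> = "\<lambda>R. \<mu> (Inner u R)"])
      show "\<exists>m j. \<mu> (Inner u R) = Outer u m j \<and> adj u m \<and> (j \<longleftrightarrow> m \<in> R)"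
        if "R \<subseteq> nbrs adj u" "even (card R)" for R
        using adjI_l[OF ad[OF inXu[OF that]]] by blast
      show "R = R'" if "R \<subseteq> nbrs adj u" "even (card R)" "R' \<subseteq> nbrs adj u" "even (card R')"
          "\<mu> (Inner u R) = \<mu> (Inner u R')" for R R'
        using ei[OF inXu[OF that(1,2)] inXu[OF that(3,4)] that(5)] by simp
      show "\<mu> (Inner u R) \<noteq> Outer u v i" if "R \<subseteq> nbrs adj u" "even (card R)" for R
        using ei[OF inXu[OF that] qX] gq by (auto simp: q_def)
      show "T \<subseteq> nbrs adj u" "even (card T)" using Ts by simp_all
      show "\<mu> (Inner u T) = Outer u v (\<not> i)" using aX T by simp
    qed
    thus ?thesis using that by blast
  qed
  define a' where "a' = Inner u T'"
  have a'X: "a' \<in> X" using inXu[OF T'(1,2)] by (simp add: a'_def)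
  define \<phi> where "\<phi> = (\<lambda>R. inv_into X \<mu> (Inner v R))"
  have ph: "\<phi> R \<in> X \<and> \<mu> (\<phi> R) = Inner v R" if "R \<subseteq> nbrs adj v" "even (card R)" for R
  proof -
    have "Inner v R \<in> \<mu> ` X" using inYv[OF that] im by simp
    thus ?thesis by (simp add: \<phi>_def inv_into_into f_inv_into_f)
  qed
  obtain S' where S': "S' \<subseteq> nbrs adj v" "even (card S')" "u \<in> S' \<longleftrightarrow> i"
      "\<exists>m. adj v m \<and> \<phi> S' = Outer v m (m \<in> S)"
  proof -
    have "\<exists>S'. S' \<subseteq> nbrs adj v \<and> even (card S') \<and> (u \<in> S' \<longleftrightarrow> i) \<and> (\<exists>m. adj v m \<and> \<phi> S' = Outer v m (m \<in> S))"
    proof (rule gadget_G[OF nbv, where \<phi> = \<phi>])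
      show "\<exists>m j. \<phi> R = Outer v m j \<and> adj v m \<and> (j \<longleftrightarrow> m \<in> R)"
        if "R \<subseteq> nbrs adj v" "even (card R)" for R
        using adjI_r[of adj "\<phi> R" v R] ad[OF ph[OF that, THEN conjunct1]] ph[OF that] by auto
      show "R = R'" if "R \<subseteq> nbrs adj v" "even (card R)" "R' \<subseteq> nbrs adj v" "even (card R')"
          "\<phi> R = \<phi> R'" for R R'
        using ph[OF that(1,2)] ph[OF that(3,4)] that(5) by (metis hv.inject(1))
      show "\<phi> R \<noteq> Outer v u i" if "R \<subseteq> nbrs adj v" "even (card R)" for R
        using ph[OF that] gq by (auto simp: q_def)
      show "S \<subseteq> nbrs adj v" "even (card S)" using Ss by simp_all
      have "inv_into X \<mu> (\<mu> p) = p" by (rule inv_into_f_f[OF inj pX])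
      thus "\<phi> S = Outer v u (\<not> i)"
        using S(1) by (simp add: \<phi>_def p_def)
    qed
    thus ?thesis using that by blast
  qed
  define r where "r = \<phi> S'"
  obtain m where m: "adj v m" "r = Outer v m (m \<in> S)" using S'(4) by (auto simp: r_def)
  have rX: "r \<in> X" "\<mu> r = Inner v S'" using ph[OF S'(1,2)] by (simp_all add: r_def)
  obtain m' where m': "adj u m'" "\<mu> a' = Outer u m' (m' \<in> T)" using T'(4) by (auto simp: a'_def)
  have SS': "S \<noteq> S'" using S(2) S'(3) by auto
  have TT': "T \<noteq> T'" using T(2) T'(3) by auto
  have d_pq: "p \<noteq> q" by (simp add: p_def q_def)
  have d_rp: "r \<noteq> p" using rX(2) S(1) SS' by auto
  have d_rq: "r \<noteq> q" using rX(2) gq by auto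
  have d_aa: "a \<noteq> a'" using T(1) TT' by (simp add: a'_def)
  have d_pa: "p \<noteq> a" "p \<noteq> a'" "q \<noteq> a" "q \<noteq> a'" "r \<noteq> a" "r \<noteq> a'"
    using T(1) m(2) by (simp_all add: p_def q_def a'_def)
  define \<tau> where "\<tau> = transpose p a \<circ> transpose a a' \<circ> transpose a' q \<circ> transpose q r"
  have tp: "\<tau> p = a" and ta: "\<tau> a = a'" and ta': "\<tau> a' = q" and tq: "\<tau> q = r" and tr: "\<tau> r = p"
    using d_pq d_rp d_rq d_aa d_pa by (auto simp: \<tau>_def transpose_def)
  have tx: "\<tau> x = x" if "x \<noteq> p" "x \<noteq> a" "x \<noteq> a'" "x \<noteq> q" "x \<noteq> r" for x
    using that by (auto simp: \<tau>_def transpose_def)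
  have tperm: "\<tau> permutes X"
    unfolding \<tau>_def using pX aX(1) a'X qX rX(1)
    by (intro permutes_compose permutes_swap_id) auto
  have tsign: "sign \<tau> = 1"
  proof -
    have pt: "\<And>x y. permutation (transpose x y)" by (simp add: permutation_swap_id)
    have "sign \<tau> = sign (transpose p a) * sign (transpose a a') * sign (transpose a' q) * sign (transpose q r)"
      unfolding \<tau>_def by (simp add: sign_compose permutation_compose pt)
    also have "\<dots> = 1"
      using d_pq d_rp d_rq d_aa d_pa by (simp add: sign_swap_id)
    finally show ?thesis .
  qed
  define \<mu>' where "\<mu>' = \<mu> \<circ> \<tau>"
  have m'p: "\<mu>' p = Outer u v (\<not> i)" using tp aX by (simp add: \<mu>'_def)
  have m'q: "\<mu>' q = Inner v S'" using tq rX by (simp add: \<mu>'_def)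
  have m'r: "\<mu>' r = Inner v S" using tr S by (simp add: \<mu>'_def)
  have m'a: "\<mu>' a = Outer u m' (m' \<in> T)" using ta m' by (simp add: \<mu>'_def)
  have m'a': "\<mu>' a' = Outer u v i" using ta' gq by (simp add: \<mu>'_def)
  have m'x: "\<mu>' x = \<mu> x" if "x \<noteq> p" "x \<noteq> a" "x \<noteq> a'" "x \<noteq> q" "x \<noteq> r" for x
    using tx[OF that] by (simp add: \<mu>'_def)
  have pm': "perfect_matching U V adj \<mu>'"
    unfolding perfect_matching_def X_def[symmetric] Y_def[symmetric]
  proof
    show "bij_betw \<mu>' X Y" unfolding \<mu>'_def by (rule bij_betw_trans[OF permutes_imp_bij[OF tperm] b])
    show "\<forall>x\<in>X. hat_adj adj x (\<mu>' x)"
    proof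
      fix x assume xX: "x \<in> X"
      show "hat_adj adj x (\<mu>' x)"
      proof -
        consider "x = p" | "x = a" | "x = a'" | "x = q" | "x = r" | "x \<noteq> p \<and> x \<noteq> a \<and> x \<noteq> a' \<and> x \<noteq> q \<and> x \<noteq> r" by blast
        thus ?thesis
        proof cases
          case 1 thus ?thesis using m'p uv(4) by (simp add: p_def)
        next
          case 2 thus ?thesis using m'a m' T(1) Ts by simp
        next
          case 3 thus ?thesis using m'a' T'(1,2,3) uv(4) by (simp add: a'_def)
        next
          case 4 thus ?thesis using m'q S'(1,2,3) adjvu by (simp add: q_def)
        next
          case 5 thus ?thesis using m'r m Ss by simp
        next
          case 6 thus ?thesis using m'x ad[OF xX] by simp
        qed
      qed
    qed
  qed
  have good': "good U V adj F (f(e := \<not> f e)) \<mu>'"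
    unfolding good_def
  proof (intro conjI pm' allI impI)
    fix u0 v0 i0 assume u0: "u0 \<in> U" and v0: "v0 \<in> V" and a0: "adj u0 v0"
    show "\<mu>' (Outer v0 u0 i0) = Outer u0 v0 i0 \<longleftrightarrow> {u0,v0} \<in> F \<and> i0 = (f(e := \<not> f e)) {u0,v0}"
    proof (cases "u0 = u \<and> v0 = v")
      case True
      show ?thesis
      proof (cases "i0 = i")
        case True
        have x: "Outer v0 u0 i0 = q" using \<open>u0 = u \<and> v0 = v\<close> True by (simp add: q_def)
        have ee: "{u0,v0} = e" using \<open>u0 = u \<and> v0 = v\<close> uv(1) by simp
        show ?thesis unfolding x ee using m'q True by (simp add: i_def)
      next
        case False
        hence "i0 = (\<not> i)" by simp
        have x: "Outer v0 u0 i0 = p" using \<open>u0 = u \<and> v0 = v\<close> \<open>i0 = (\<not> i)\<close> by (simp add: p_def)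
        have ee: "{u0,v0} = e" using \<open>u0 = u \<and> v0 = v\<close> uv(1) by simp
        show ?thesis unfolding x ee using m'p \<open>i0 = (\<not> i)\<close> \<open>u0 = u \<and> v0 = v\<close> eF by (simp add: i_def)
      qed
    next
      case False
      have ne: "{u0,v0} \<noteq> e" using doubleton_sides[OF disj u0 v0 uv(2) uv(3)] False uv(1) by blast
      let ?x = "Outer v0 u0 i0"
      have xp: "?x \<noteq> p" "?x \<noteq> q" using False by (auto simp: p_def q_def)
      have xa: "?x \<noteq> a" "?x \<noteq> a'" using T(1) by (simp_all add: a'_def)
      have "\<mu>' ?x = Outer u0 v0 i0 \<longleftrightarrow> \<mu> ?x = Outer u0 v0 i0"
      proof (cases "?x = r")
        case True thus ?thesis using m'r rX(2) by simp
      next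
        case False thus ?thesis using m'x xp xa by simp
      qed
      thus ?thesis using gdc[OF u0 v0 a0, of i0] ne by simp
    qed
  qed
  have "pm_sgn U V adj \<eta> \<eta>' \<mu>' = pm_sgn U V adj \<eta> \<eta>' \<mu>"
    by (rule pm_sgn_perm[OF eta eta' pm_bij[OF pm], of \<tau>]) (use tperm tsign in \<open>simp_all add: X_def \<mu>'_def\<close>)
  thus ?thesis using good' by blast
qed

theorem mainTheorem5:
  fixes U V :: "'a set" and adj :: "'a \<Rightarrow> 'a \<Rightarrow> bool"
    and \<eta> \<eta>' :: "'a hv \<Rightarrow> nat" and F :: "'a set set" and f g :: "'a set \<Rightarrow> bool"
    and \<mu>1 \<mu>2 :: "'a hv \<Rightarrow> 'a hv"
  assumes "cubic_bipartite U V adj"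
    and "bij_betw \<eta> (Xset U V adj) {1..10 * card U}"
    and "bij_betw \<eta>' (Yset U V adj) {1..10 * card U}"
    and "two_factor U V adj F"
    and "\<mu>1 \<in> mu_Ff U V adj F f"
    and "\<mu>2 \<in> mu_Ff U V adj F g"
  shows "pm_sgn U V adj \<eta> \<eta>' \<mu>1 = pm_sgn U V adj \<eta> \<eta>' \<mu>2"
proof -
  note cb = assms(1) and eta = assms(2) and eta' = assms(3) and tf = assms(4)
  have G1: "good U V adj F f \<mu>1" using good_of_mu[OF cb assms(5)] .
  have G2: "good U V adj F g \<mu>2" using good_of_mu[OF cb assms(6)] .
  have Fe: "F \<subseteq> edges adj" using tf by (simp add: two_factor_def)
  have finF: "finite F" using edges_finite[OF cb] Fe finite_subset by blast
  have main: "\<forall>f' \<nu>. good U V adj F f' \<nu> \<longrightarrow> card {e\<in>F. f' e \<noteq> g e} = n \<longrightarrow>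
      pm_sgn U V adj \<eta> \<eta>' \<nu> = pm_sgn U V adj \<eta> \<eta>' \<mu>2" for n
  proof (induction n)
    case 0
    show ?case
    proof (intro allI impI)
      fix f' \<nu> assume gn: "good U V adj F f' \<nu>" and c: "card {e\<in>F. f' e \<noteq> g e} = 0"
      have "{e\<in>F. f' e \<noteq> g e} = {}" using c finF by simp
      hence "\<forall>e\<in>F. f' e = g e" by blast
      hence "good U V adj F g \<nu>" using good_cong[OF gn] by blast
      thus "pm_sgn U V adj \<eta> \<eta>' \<nu> = pm_sgn U V adj \<eta> \<eta>' \<mu>2"
        using same_f[OF cb tf G2 _ eta eta'] by blast
    qed
  next
    case (Suc n)
    show ?case
    proof (intro allI impI)
      fix f' \<nu> assume gn: "good U V adj F f' \<nu>" and c: "card {e\<in>F. f' e \<noteq> g e} = Suc n"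
      obtain e where e: "e \<in> {e\<in>F. f' e \<noteq> g e}" using c by (metis card.empty ex_in_conv nat.distinct(1))
      obtain \<nu>' where nu': "good U V adj F (f'(e := \<not> f' e)) \<nu>'" "pm_sgn U V adj \<eta> \<eta>' \<nu>' = pm_sgn U V adj \<eta> \<eta>' \<nu>"
        using flip[OF cb tf gn _ eta eta', of e] e by blast
      have eq: "{e'\<in>F. (f'(e := \<not> f' e)) e' \<noteq> g e'} = {e\<in>F. f' e \<noteq> g e} - {e}"
        using e by auto
      have fA: "finite {e\<in>F. f' e \<noteq> g e}" using finF by simp
      have "card ({e\<in>F. f' e \<noteq> g e} - {e}) = card {e\<in>F. f' e \<noteq> g e} - 1"
        by (rule card_Diff_singleton[OF e])
      hence "card {e'\<in>F. (f'(e := \<not> f' e)) e' \<noteq> g e'} = n"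
        unfolding eq using c by simp
      thus "pm_sgn U V adj \<eta> \<eta>' \<nu> = pm_sgn U V adj \<eta> \<eta>' \<mu>2"
        using Suc.IH nu' by metis
    qed
  qed
  show ?thesis using main G1 by blast
qed

end
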